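(* Let $p_0,q\in\mathcal S^{d-1}$ and consider the preference dynamics with the fixed recommendation $q_t=q$ for all $t\ge 0$, i.e. $\tilde p_{t+1}=p_t+\eta_t\,(p_t^\top q)\,q$, $p_{t+1}=\tilde p_{t+1}/\|\tilde p_{t+1}\|_2$, with step sizes either constant ($\eta_t=\eta$) or decreasing ($\eta_t=\frac{\eta}{t+s}$). Then $p_t\to q$ as $t\to\infty$ if $p_0^\top q>0$, and $p_t\to -q$ if $p_0^\top q<0$. Furthermore, for every $t\ge0$, $p_t$ lies in the cone generated by $p_0$ and $\mathrm{sgn}(p_0^\top q)\,q$ (i.e. $p_t$ is a nonnegative linear combination of these two vectors). In particular, when $p_0^\top q\neq 0$, for all $t\ge 0$, \[(p_t^\top q)^{-2}=1+\gamma_t^2\big((p_0^\top q)^{-2}-1\big),\qquad \gamma_t=\begin{cases}(\eta+1)^{-t}, & \eta_t=\eta,\\[2pt] \prod_{k=0}^{\eta-1}\frac{s+k}{t+s+k}, & \eta_t=\frac{\eta}{t+s}.\end{cases}\]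
   Context: $\mathcal S^{d-1}$ denotes the unit sphere in $\mathbb{R}^d$. In the constant step-size setting $\eta>0$ is a constant; in the decreasing step-size setting $\eta$ and $s$ are positive integers. $\mathrm{sgn}$ denotes the sign function. *)

theory Defs
  imports "HOL-Analysis.Analysis"
begin

fun pref_seq :: "(nat \<Rightarrow> real) \<Rightarrow> 'a::real_inner \<Rightarrow> 'a \<Rightarrow> nat \<Rightarrow> 'a" where
  "pref_seq eta q p0 0 = p0"
| "pref_seq eta q p0 (Suc t) =
     (let pt = pref_seq eta q p0 t;
          pt' = pt + (eta t * (pt \<bullet> q)) *\<^sub>R q
      in pt' /\<^sub>R norm pt')"

end

theory Submission
  imports Defs
begin

definition GG :: "(nat \<Rightarrow> real) \<Rightarrow> nat \<Rightarrow> real" where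
  "GG eta t = (\<Prod>j<t. 1 + eta j)"

definition PP :: "(nat \<Rightarrow> real) \<Rightarrow> 'a::real_inner \<Rightarrow> 'a \<Rightarrow> nat \<Rightarrow> 'a" where
  "PP eta q p0 t = p0 + ((GG eta t - 1) * (p0 \<bullet> q)) *\<^sub>R q"

lemma GG_ge1: assumes "\<forall>j. eta j > 0" shows "GG eta t \<ge> 1"
  unfolding GG_def using assms by (intro prod_ge_1) (auto simp: less_imp_le)

lemma PP_norm2:
  fixes p0 q :: "'a::real_inner"
  assumes "norm p0 = 1" "norm q = 1"
  shows "(norm (PP eta q p0 t))\<^sup>2 = 1 + ((GG eta t)\<^sup>2 - 1) * (p0 \<bullet> q)\<^sup>2"
proof -
  have pp: "p0 \<bullet> p0 = 1" "q \<bullet> q = 1" using assms by (simp_all add: dot_square_norm)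
  show ?thesis
    unfolding power2_norm_eq_inner PP_def
    by (simp add: inner_add_left inner_add_right pp inner_commute power2_eq_square algebra_simps)
qed

lemma PP_q: "PP eta q p0 t \<bullet> q = GG eta t * (p0 \<bullet> q) + 0 * (norm q)" if "norm q = 1"
  for q p0 :: "'a::real_inner"
proof -
  have "q \<bullet> q = 1" using that by (simp add: dot_square_norm)
  then show ?thesis unfolding PP_def by (simp add: inner_add_left algebra_simps)
qed

lemma PP_pos:
  fixes p0 q :: "'a::real_inner"
  assumes "norm p0 = 1" "norm q = 1" "\<forall>j. eta j > 0"
  shows "norm (PP eta q p0 t) \<ge> 1"
proof -
  have G: "GG eta t \<ge> 1" using GG_ge1 assms(3) by blast
  have "1 * 1 \<le> GG eta t * GG eta t" using G by (intro mult_mono) auto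
  then have "(GG eta t)\<^sup>2 - 1 \<ge> 0" by (simp add: power2_eq_square)
  then have "((GG eta t)\<^sup>2 - 1) * (p0 \<bullet> q)\<^sup>2 \<ge> 0" by simp
  then have "(norm (PP eta q p0 t))\<^sup>2 \<ge> 1\<^sup>2"
    using PP_norm2[OF assms(1,2), of eta t] by simp
  then show ?thesis by (rule power2_le_imp_le) simp
qed

lemma pref_PP:
  fixes p0 q :: "'a::real_inner"
  assumes "norm p0 = 1" "norm q = 1" "\<forall>j. eta j > 0"
  shows "pref_seq eta q p0 t = PP eta q p0 t /\<^sub>R norm (PP eta q p0 t)"
proof (induction t)
  case 0
  then show ?case using assms by (simp add: PP_def GG_def)
next
  case (Suc t)
  define P where "P = PP eta q p0 t"
  define n where "n = norm P"
  have n0: "n > 0" using PP_pos[OF assms, of t] unfolding n_def P_def by linarith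
  have Pq: "P \<bullet> q = GG eta t * (p0 \<bullet> q)" using PP_q[OF assms(2)] P_def by simp
  have GS: "GG eta (Suc t) = GG eta t * (1 + eta t)" by (simp add: GG_def)
  have key: "P /\<^sub>R n + (eta t * ((P /\<^sub>R n) \<bullet> q)) *\<^sub>R q = PP eta q p0 (Suc t) /\<^sub>R n"
  proof -
    have "P /\<^sub>R n + (eta t * ((P /\<^sub>R n) \<bullet> q)) *\<^sub>R q = (1/n) *\<^sub>R (P + (eta t * (P \<bullet> q)) *\<^sub>R q)"
      by (simp add: scaleR_add_right divide_inverse mult.commute mult.left_commute)
    also have "P + (eta t * (P \<bullet> q)) *\<^sub>R q = PP eta q p0 (Suc t)"
    proof -
      have ar: "(GG eta t * (1 + eta t) - 1) * (p0 \<bullet> q) = (GG eta t - 1) * (p0 \<bullet> q) + eta t * (GG eta t * (p0 \<bullet> q))"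
        by (simp add: algebra_simps)
      show ?thesis unfolding Pq unfolding P_def PP_def GS ar by (simp only: scaleR_add_left add.assoc)
    qed
    finally show ?thesis by (simp add: divide_inverse)
  qed
  have "pref_seq eta q p0 (Suc t) = (PP eta q p0 (Suc t) /\<^sub>R n) /\<^sub>R norm (PP eta q p0 (Suc t) /\<^sub>R n)"
    using Suc key by (simp add: Let_def P_def n_def)
  also have "\<dots> = PP eta q p0 (Suc t) /\<^sub>R norm (PP eta q p0 (Suc t))"
    using n0 by simp
  finally show ?case .
qed


lemma pref_neg: "pref_seq eta (-q) p0 t = pref_seq eta q p0 t"
  by (induction t) (simp_all add: Let_def)

lemma pref_dot:
  fixes p0 q :: "'a::real_inner"
  assumes "norm p0 = 1" "norm q = 1" "\<forall>j. eta j > 0"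
  shows "pref_seq eta q p0 t \<bullet> q = GG eta t * (p0 \<bullet> q) / norm (PP eta q p0 t)"
  using pref_PP[OF assms, of t] PP_q[OF assms(2), of eta p0 t] by (simp add: divide_inverse mult.commute)

lemma pref_formula:
  fixes p0 q :: "'a::real_inner"
  assumes "norm p0 = 1" "norm q = 1" "\<forall>j. eta j > 0" "p0 \<bullet> q \<noteq> 0"
    and g: "g = inverse (GG eta t)"
  shows "inverse ((pref_seq eta q p0 t \<bullet> q)\<^sup>2) = 1 + g\<^sup>2 * (inverse ((p0 \<bullet> q)\<^sup>2) - 1)"
proof -
  have G1: "GG eta t \<ge> 1" using GG_ge1 assms(3) by blast
  have N1: "norm (PP eta q p0 t) \<ge> 1" using PP_pos[OF assms(1-3)] by blast
  have "inverse ((pref_seq eta q p0 t \<bullet> q)\<^sup>2) = (norm (PP eta q p0 t))\<^sup>2 / (GG eta t * (p0 \<bullet> q))\<^sup>2"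
    unfolding pref_dot[OF assms(1-3)] using N1 by (simp add: power_divide)
  also have "\<dots> = (1 + ((GG eta t)\<^sup>2 - 1) * (p0 \<bullet> q)\<^sup>2) / (GG eta t * (p0 \<bullet> q))\<^sup>2"
    unfolding PP_norm2[OF assms(1,2)] ..
  also have "\<dots> = 1 + g\<^sup>2 * (inverse ((p0 \<bullet> q)\<^sup>2) - 1)"
    unfolding g using G1 assms(4) by (simp add: field_simps power2_eq_square)
  finally show ?thesis .
qed

lemma pref_cone:
  fixes p0 q :: "'a::real_inner"
  assumes "norm p0 = 1" "norm q = 1" "\<forall>j. eta j > 0"
  shows "\<exists>a b. a \<ge> 0 \<and> b \<ge> 0 \<and>
          pref_seq eta q p0 t = a *\<^sub>R p0 + b *\<^sub>R (sgn (p0 \<bullet> q) *\<^sub>R q)"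
proof (intro exI conjI)
  have G1: "GG eta t \<ge> 1" using GG_ge1 assms(3) by blast
  have N1: "norm (PP eta q p0 t) \<ge> 1" using PP_pos[OF assms(1-3)] by blast
  show "0 \<le> 1 / norm (PP eta q p0 t)" using N1 by simp
  show "0 \<le> (GG eta t - 1) * \<bar>p0 \<bullet> q\<bar> / norm (PP eta q p0 t)" using N1 G1 by simp
  have "sgn (p0 \<bullet> q) * \<bar>p0 \<bullet> q\<bar> = p0 \<bullet> q" by (simp add: sgn_mult_abs)
  then show "pref_seq eta q p0 t = (1 / norm (PP eta q p0 t)) *\<^sub>R p0 +
     ((GG eta t - 1) * \<bar>p0 \<bullet> q\<bar> / norm (PP eta q p0 t)) *\<^sub>R (sgn (p0 \<bullet> q) *\<^sub>R q)"
    unfolding pref_PP[OF assms] PP_def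
    by (simp add: scaleR_add_right divide_inverse mult.commute mult.left_commute)
qed

lemma pref_conv:
  fixes p0 q :: "'a::real_inner"
  assumes "norm p0 = 1" "norm q = 1" "\<forall>j. eta j > 0" "p0 \<bullet> q > 0"
    and g: "\<forall>t. gam t = inverse (GG eta t)" and g0: "gam \<longlonglongrightarrow> 0"
  shows "pref_seq eta q p0 \<longlonglongrightarrow> q"
proof -
  define K where "K = inverse ((p0 \<bullet> q)\<^sup>2) - 1"
  have lim1: "(\<lambda>t. inverse (sqrt (1 + (gam t)\<^sup>2 * K))) \<longlonglongrightarrow> inverse (sqrt (1 + 0\<^sup>2 * K))"
    by (intro tendsto_intros g0) auto
  have eq: "pref_seq eta q p0 t \<bullet> q = inverse (sqrt (1 + (gam t)\<^sup>2 * K))" for t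
  proof -
    have pos: "pref_seq eta q p0 t \<bullet> q > 0"
      unfolding pref_dot[OF assms(1-3)] using GG_ge1[OF assms(3), of t] PP_pos[OF assms(1-3), of t] assms(4)
      by (intro divide_pos_pos mult_pos_pos) auto
    have "inverse ((pref_seq eta q p0 t \<bullet> q)\<^sup>2) = 1 + (gam t)\<^sup>2 * K"
      unfolding K_def using pref_formula[OF assms(1-3) _ g[rule_format]] assms(4) by simp
    then have "(inverse (pref_seq eta q p0 t \<bullet> q))\<^sup>2 = 1 + (gam t)\<^sup>2 * K"
      by (simp add: power_inverse)
    then have "sqrt (1 + (gam t)\<^sup>2 * K) = inverse (pref_seq eta q p0 t \<bullet> q)"
      using pos by (intro real_sqrt_unique) auto
    then show ?thesis by simp
  qed
  have lim2: "(\<lambda>t. pref_seq eta q p0 t \<bullet> q) \<longlonglongrightarrow> 1"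
    using lim1 unfolding eq by simp
  have n1: "norm (pref_seq eta q p0 t) = 1" for t
    proof -
    have "norm (PP eta q p0 t) \<noteq> 0" using PP_pos[OF assms(1-3), of t] by linarith
    then show ?thesis unfolding pref_PP[OF assms(1-3)] by simp
  qed
  have qq: "q \<bullet> q = 1" using assms(2) by (simp add: dot_square_norm)
  have eqn: "norm (pref_seq eta q p0 t - q) = sqrt (2 - 2 * (pref_seq eta q p0 t \<bullet> q))" for t
  proof -
    have sq: "(norm (pref_seq eta q p0 t - q))\<^sup>2 = 2 - 2 * (pref_seq eta q p0 t \<bullet> q)"
    proof -
      have pp: "pref_seq eta q p0 t \<bullet> pref_seq eta q p0 t = 1" using n1[of t] by (simp add: dot_square_norm)
      show ?thesis unfolding power2_norm_eq_inner using pp qq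
        by (simp add: inner_diff_left inner_diff_right inner_commute)
    qed
    then show ?thesis using real_sqrt_unique[OF sq norm_ge_zero] by simp
  qed
  have "(\<lambda>t. sqrt (2 - 2 * (pref_seq eta q p0 t \<bullet> q))) \<longlonglongrightarrow> sqrt (2 - 2 * 1)"
    by (intro tendsto_intros lim2)
  then have "(\<lambda>t. norm (pref_seq eta q p0 t - q)) \<longlonglongrightarrow> 0" unfolding eqn by simp
  then show ?thesis by (simp only: tendsto_norm_zero_iff LIM_zero_iff)
qed


lemma main_general:
  fixes p0 q :: "'a::real_inner"
  assumes p0_sphere: "norm p0 = 1" and q_sphere: "norm q = 1"
    and ep: "\<forall>j. eta j > 0" and g: "\<forall>t. gam t = inverse (GG eta t)" and g0: "gam \<longlonglongrightarrow> 0"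
  shows "(p0 \<bullet> q > 0 \<longrightarrow> pref_seq eta q p0 \<longlonglongrightarrow> q)
    \<and> (p0 \<bullet> q < 0 \<longrightarrow> pref_seq eta q p0 \<longlonglongrightarrow> - q)
    \<and> (\<forall>t. \<exists>a b. a \<ge> 0 \<and> b \<ge> 0 \<and>
          pref_seq eta q p0 t = a *\<^sub>R p0 + b *\<^sub>R (sgn (p0 \<bullet> q) *\<^sub>R q))
    \<and> (p0 \<bullet> q \<noteq> 0 \<longrightarrow> (\<forall>t.
          inverse ((pref_seq eta q p0 t \<bullet> q)\<^sup>2)
            = 1 + (gam t)\<^sup>2 * (inverse ((p0 \<bullet> q)\<^sup>2) - 1)))"
proof (intro conjI impI allI)
  show "pref_seq eta q p0 \<longlonglongrightarrow> q" if "p0 \<bullet> q > 0"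
    using pref_conv[OF assms(1-3) that g g0] .
  show "pref_seq eta q p0 \<longlonglongrightarrow> - q" if "p0 \<bullet> q < 0"
  proof -
    have "norm (-q) = 1" using q_sphere by simp
    moreover have "p0 \<bullet> (-q) > 0" using that by simp
    ultimately have "pref_seq eta (-q) p0 \<longlonglongrightarrow> - q"
      using pref_conv[OF p0_sphere _ ep _ g g0] by blast
    moreover have "pref_seq eta (-q) p0 = pref_seq eta q p0" by (rule ext) (rule pref_neg)
    ultimately show ?thesis by simp
  qed
  show "\<exists>a b. a \<ge> 0 \<and> b \<ge> 0 \<and>
          pref_seq eta q p0 t = a *\<^sub>R p0 + b *\<^sub>R (sgn (p0 \<bullet> q) *\<^sub>R q)" for t
    using pref_cone[OF assms(1-3)] .
  show "inverse ((pref_seq eta q p0 t \<bullet> q)\<^sup>2)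
            = 1 + (gam t)\<^sup>2 * (inverse ((p0 \<bullet> q)\<^sup>2) - 1)" if "p0 \<bullet> q \<noteq> 0" for t
    using pref_formula[OF assms(1-3) that] g by blast
qed

lemma telescope: "(a::real) > 0 \<Longrightarrow> (\<Prod>k<n. (a + real k) / (a + 1 + real k)) = a / (a + real n)"
  by (induction n) (auto simp: field_simps)

lemma gam_dec:
  fixes e s :: nat
  assumes "e > 0" "s > 0"
  shows "(\<Prod>k<e. real (s + k) / real (t + s + k)) = inverse (GG (\<lambda>t. real e / real (t + s)) t)"
proof (induction t)
  case 0
  then show ?case using assms by (simp add: GG_def)
next
  case (Suc t)
  have "(\<Prod>k<e. real (s + k) / real (Suc t + s + k))
      = (\<Prod>k<e. real (s + k) / real (t + s + k) * ((real (t + s) + real k) / (real (t + s) + 1 + real k)))"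
  proof (intro prod.cong refl)
    fix k assume "k \<in> {..<e}"
    have a: "real (t + s) + real k = real (t + s + k)" "real (t + s) + 1 + real k = real (Suc t + s + k)" by simp_all
    have nz: "real (t + s + k) \<noteq> 0" using assms by simp
    show "real (s + k) / real (Suc t + s + k) = real (s + k) / real (t + s + k) * ((real (t + s) + real k) / (real (t + s) + 1 + real k))"
      unfolding a using nz by simp
  qed
  also have "\<dots> = (\<Prod>k<e. real (s + k) / real (t + s + k)) * (real (t+s) / (real (t+s) + real e))"
  proof -
    have tp: "real (t + s) > 0" using assms by simp
    show ?thesis unfolding prod.distrib telescope[OF tp, of e] by simp
  qed
  also have "\<dots> = inverse (GG (\<lambda>t. real e / real (t + s)) (Suc t))"
    unfolding Suc GG_def using assms by (simp add: field_simps)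
  finally show ?case .
qed

lemma gam_dec_bound:
  fixes e s :: nat
  assumes "e > 0" "s > 0"
  shows "(\<Prod>k<e. real (s + k) / real (t + s + k)) \<le> real s / real (t + s)"
proof -
  have "(\<Prod>k<e. real (s + k) / real (t + s + k)) = real s / real (t + s) * (\<Prod>k\<in>{..<e}-{0}. real (s + k) / real (t + s + k))"
    using assms by (subst prod.remove[of _ 0]) auto
  also have "\<dots> \<le> real s / real (t + s) * 1"
    by (intro mult_left_mono prod_le_1) auto
  finally show ?thesis by simp
qed

theorem proposition1:
  fixes p0 q :: "'a::euclidean_space"
    and eta :: "nat \<Rightarrow> real" and gam :: "nat \<Rightarrow> real"
  assumes p0_sphere: "norm p0 = 1" and q_sphere: "norm q = 1"
    and steps:
      "(\<exists>\<eta>::real. \<eta> > 0 \<and> eta = (\<lambda>t. \<eta>)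
           \<and> gam = (\<lambda>t. inverse ((\<eta> + 1) ^ t)))
       \<or> (\<exists>(\<eta>::nat) (s::nat). \<eta> > 0 \<and> s > 0
           \<and> eta = (\<lambda>t. real \<eta> / real (t + s))
           \<and> gam = (\<lambda>t. \<Prod>k<\<eta>. real (s + k) / real (t + s + k)))"
  shows "(p0 \<bullet> q > 0 \<longrightarrow> pref_seq eta q p0 \<longlonglongrightarrow> q)
    \<and> (p0 \<bullet> q < 0 \<longrightarrow> pref_seq eta q p0 \<longlonglongrightarrow> - q)
    \<and> (\<forall>t. \<exists>a b. a \<ge> 0 \<and> b \<ge> 0 \<and>
          pref_seq eta q p0 t = a *\<^sub>R p0 + b *\<^sub>R (sgn (p0 \<bullet> q) *\<^sub>R q))
    \<and> (p0 \<bullet> q \<noteq> 0 \<longrightarrow> (\<forall>t.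
          inverse ((pref_seq eta q p0 t \<bullet> q)\<^sup>2)
            = 1 + (gam t)\<^sup>2 * (inverse ((p0 \<bullet> q)\<^sup>2) - 1)))"
  using steps
proof
  assume "\<exists>\<eta>::real. \<eta> > 0 \<and> eta = (\<lambda>t. \<eta>) \<and> gam = (\<lambda>t. inverse ((\<eta> + 1) ^ t))"
  then obtain e :: real where e: "e > 0" "eta = (\<lambda>t. e)" "gam = (\<lambda>t. inverse ((e + 1) ^ t))" by blast
  have ep: "\<forall>j. eta j > 0" using e by simp
  have g: "\<forall>t. gam t = inverse (GG eta t)" using e by (simp add: GG_def add.commute)
  have g0: "gam \<longlonglongrightarrow> 0" unfolding e(3) using e(1) by (intro LIMSEQ_inverse_realpow_zero) simp
  show ?thesis using main_general[OF p0_sphere q_sphere ep g g0] .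
next
  assume "\<exists>(\<eta>::nat) (s::nat). \<eta> > 0 \<and> s > 0
           \<and> eta = (\<lambda>t. real \<eta> / real (t + s))
           \<and> gam = (\<lambda>t. \<Prod>k<\<eta>. real (s + k) / real (t + s + k))"
  then obtain e s :: nat where e: "e > 0" "s > 0" "eta = (\<lambda>t. real e / real (t + s))"
      "gam = (\<lambda>t. \<Prod>k<e. real (s + k) / real (t + s + k))" by blast
  have ep: "\<forall>j. eta j > 0" using e by simp
  have g: "\<forall>t. gam t = inverse (GG eta t)" using e gam_dec by simp
  have lim: "(\<lambda>t. real s / real (t + s)) \<longlonglongrightarrow> 0" using LIMSEQ_ignore_initial_segment[OF lim_const_over_n[of "real s"], of s] by simp
  have g0: "gam \<longlonglongrightarrow> 0"
  proof (rule tendsto_sandwich[OF _ _ tendsto_const lim])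
    show "\<forall>\<^sub>F t in sequentially. 0 \<le> gam t" unfolding e(4) by (intro always_eventually allI prod_nonneg) auto
    show "\<forall>\<^sub>F t in sequentially. gam t \<le> real s / real (t + s)"
      unfolding e(4) using gam_dec_bound[OF e(1,2)] by (intro always_eventually allI) blast
  qed
  show ?thesis using main_general[OF p0_sphere q_sphere ep g g0] .
qed

end
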